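(* Let $V:\mathbb R^3\to\mathbb R$ be in $L^\infty_{loc}(\mathbb R^3)$ with $\operatorname{ess\,inf}V>0$, and let $\varepsilon>0$. If $\{u_n\}\subset\mathcal M_\varepsilon$ is bounded in $W_\varepsilon$, then $\{u_n\}$ cannot converge to zero in $L^{12/5}(\mathbb R^3)$.
   Context: $W_\varepsilon:=\{u\in H^1(\mathbb R^3):\int_{\mathbb R^3}V(\varepsilon x)u^2<\infty\}$ with norm $\|u\|_{W_\varepsilon}^2=\int|\nabla u|^2+\int V(\varepsilon x)u^2$. For $u\in H^1(\mathbb R^3)$, $\phi_u(x)=\int_{\mathbb R^3}\frac{1-e^{-|x-y|}}{|x-y|}u^2(y)\,dy$, and $\mathcal M_\varepsilon=\{u\in W_\varepsilon:\int_{\mathbb R^3}\phi_uu^2=1\}$. *)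

theory Defs
  imports "HOL-Analysis.Analysis"
begin

type_synonym R3 = "real^3"

definition test_fun :: "(R3 \<Rightarrow> real) \<Rightarrow> (R3 \<Rightarrow> R3) \<Rightarrow> bool" where
  "test_fun \<phi> D\<phi> \<longleftrightarrow>
     (\<forall>x. (\<phi> has_derivative (\<lambda>h. D\<phi> x \<bullet> h)) (at x)) \<and>
     continuous_on UNIV D\<phi> \<and> bounded {x. \<phi> x \<noteq> 0}"

definition weak_gradient :: "(R3 \<Rightarrow> real) \<Rightarrow> (R3 \<Rightarrow> R3) \<Rightarrow> bool" where
  "weak_gradient u G \<longleftrightarrow>
     u \<in> borel_measurable lebesgue \<and> G \<in> borel_measurable lebesgue \<and>
     (\<forall>\<phi> D\<phi>. test_fun \<phi> D\<phi> \<longrightarrow>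
        (\<forall>i. integrable lebesgue (\<lambda>x. u x * (D\<phi> x $ i)) \<and>
             integrable lebesgue (\<lambda>x. G x $ i * \<phi> x) \<and>
             (LINT x|lebesgue. u x * (D\<phi> x $ i)) = - (LINT x|lebesgue. G x $ i * \<phi> x)))"

definition H1 :: "(R3 \<Rightarrow> real) set" where
  "H1 = {u. integrable lebesgue (\<lambda>x. (u x)\<^sup>2) \<and>
            (\<exists>G. weak_gradient u G \<and> integrable lebesgue (\<lambda>x. (norm (G x))\<^sup>2))}"

definition W_space :: "(R3 \<Rightarrow> real) \<Rightarrow> real \<Rightarrow> (R3 \<Rightarrow> real) set" where
  "W_space V \<epsilon> = {u \<in> H1. integrable lebesgue (\<lambda>x. V (\<epsilon> *\<^sub>R x) * (u x)\<^sup>2)}"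

text \<open>Squared W_eps norm; the weak gradient is unique a.e., so the choice is irrelevant.\<close>
definition W_norm_sq :: "(R3 \<Rightarrow> real) \<Rightarrow> real \<Rightarrow> (R3 \<Rightarrow> real) \<Rightarrow> real" where
  "W_norm_sq V \<epsilon> u =
     (LINT x|lebesgue. (norm ((SOME G. weak_gradient u G) x))\<^sup>2) +
     (LINT x|lebesgue. V (\<epsilon> *\<^sub>R x) * (u x)\<^sup>2)"

definition phi_pot :: "(R3 \<Rightarrow> real) \<Rightarrow> R3 \<Rightarrow> real" where
  "phi_pot u x = (LINT y|lebesgue. (1 - exp (- dist x y)) / dist x y * (u y)\<^sup>2)"

definition M_set :: "(R3 \<Rightarrow> real) \<Rightarrow> real \<Rightarrow> (R3 \<Rightarrow> real) set" where
  "M_set V \<epsilon> = {u \<in> W_space V \<epsilon>. (LINT x|lebesgue. phi_pot u x * (u x)\<^sup>2) = 1}"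

definition Linf_loc :: "(R3 \<Rightarrow> real) \<Rightarrow> bool" where
  "Linf_loc V \<longleftrightarrow> V \<in> borel_measurable lebesgue \<and>
     (\<forall>K. compact K \<longrightarrow> (\<exists>M. AE x in lebesgue. x \<in> K \<longrightarrow> \<bar>V x\<bar> \<le> M))"

definition ess_inf_pos :: "(R3 \<Rightarrow> real) \<Rightarrow> bool" where
  "ess_inf_pos V \<longleftrightarrow> (\<exists>c>0. AE x in lebesgue. c \<le> V x)"

end

theory Submission imports Defs begin

lemma AE_scale:
  fixes P :: "'a::euclidean_space \<Rightarrow> bool"
  assumes "AE x in lebesgue. P x" "(\<epsilon>::real) \<noteq> 0"
  shows "AE x in lebesgue. P (\<epsilon> *\<^sub>R x)"
proof -
  obtain N where N: "N \<in> null_sets lebesgue" "{x. \<not> P x} \<subseteq> N"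
    using assms(1) unfolding eventually_ae_filter by auto
  let ?N' = "(\<lambda>x. (1/\<epsilon>) *\<^sub>R x + 0) ` N"
  have eq: "?N' = (\<lambda>x. \<epsilon> *\<^sub>R x) -` N \<inter> space lebesgue"
  proof (auto simp: assms(2))
    fix x assume "\<epsilon> *\<^sub>R x \<in> N"
    then show "x \<in> (\<lambda>x. (1/\<epsilon>) *\<^sub>R x) ` N"
      by (rule rev_image_eqI) (simp add: assms(2))
  qed
  have "?N' \<in> sets lebesgue" unfolding eq
    using N(1) by (intro measurable_sets[OF lebesgue_measurable_scaling]) auto
  moreover have "emeasure lebesgue ?N' = 0"
    using emeasure_lebesgue_affine[of "1/\<epsilon>" 0 N] N(1) by (simp add: null_setsD1)
  ultimately have "?N' \<in> null_sets lebesgue" by auto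
  moreover have "{x. \<not> P (\<epsilon> *\<^sub>R x)} \<subseteq> ?N'"
    using eq N(2) by auto
  ultimately show ?thesis by (intro AE_I'[where N="?N'"]) auto
qed

lemma sq_bound:
  fixes a s :: real assumes "s > 0"
  shows "a\<^sup>2 \<le> s + s powr (-1/5) * \<bar>a\<bar> powr (12/5)"
proof (cases "a\<^sup>2 \<le> s")
  case True then show ?thesis by (simp add: add_increasing2)
next
  case False
  then have a0: "\<bar>a\<bar> > 0" using assms by auto
  have "s powr (1/5) \<le> (a\<^sup>2) powr (1/5)" using False assms by (intro powr_mono2) auto
  also have "(a\<^sup>2) powr (1/5) = \<bar>a\<bar> powr (2/5)"
  proof -
    have "a\<^sup>2 = \<bar>a\<bar> powr 2" using a0 by (simp add: powr_numeral)
    then have "(a\<^sup>2) powr (1/5) = \<bar>a\<bar> powr (2 * (1/5))" by (simp only: powr_powr)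
    then show ?thesis by simp
  qed
  finally have h: "s powr (1/5) \<le> \<bar>a\<bar> powr (2/5)" .
  have "\<bar>a\<bar> powr (12/5) = \<bar>a\<bar> powr (2 + 2/5)" by simp
  also have "\<dots> = \<bar>a\<bar> powr 2 * \<bar>a\<bar> powr (2/5)" by (rule powr_add)
  also have "\<bar>a\<bar> powr 2 = a\<^sup>2" using a0 by (simp add: powr_numeral)
  finally have a12: "\<bar>a\<bar> powr (12/5) = a\<^sup>2 * \<bar>a\<bar> powr (2/5)" .
  moreover have "s powr (-1/5) * s powr (1/5) = 1"
    using assms by (simp add: powr_add[symmetric])
  ultimately have "a\<^sup>2 = s powr (-1/5) * (a\<^sup>2 * s powr (1/5))" by (simp add: algebra_simps)
  also have "\<dots> \<le> s powr (-1/5) * \<bar>a\<bar> powr (12/5)"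
    using h a12 by (simp add: mult_left_mono)
  finally show ?thesis using assms by simp
qed

lemma K_bounds:
  fixes d :: real assumes "d \<ge> 0"
  shows "0 \<le> (1 - exp(-d))/d" "(1 - exp(-d))/d \<le> 1" "d > 0 \<Longrightarrow> (1 - exp(-d))/d \<le> 1/d"
proof -
  have e: "1 - d \<le> exp(-d)" using exp_ge_add_one_self[of "-d"] by simp
  show "0 \<le> (1 - exp(-d))/d" using assms by (simp add: divide_nonneg_nonneg)
  show "(1 - exp(-d))/d \<le> 1" using assms e
    by (cases "d = 0") (auto simp: divide_le_eq)
  show "d > 0 \<Longrightarrow> (1 - exp(-d))/d \<le> 1/d"
    by (simp add: divide_right_mono)
qed

lemma pt_bound:
  fixes d a R s :: real assumes "d \<ge> 0" "R > 0" "s > 0"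
  shows "(1 - exp(-d))/d * a\<^sup>2 \<le> a\<^sup>2/R + s * (if d < R then 1 else 0) + s powr (-1/5) * \<bar>a\<bar> powr (12/5)"
proof (cases "d < R")
  case True
  have "(1 - exp(-d))/d * a\<^sup>2 \<le> 1 * a\<^sup>2" using K_bounds(2)[OF assms(1)]
    by (intro mult_right_mono) auto
  also have "\<dots> \<le> s + s powr (-1/5) * \<bar>a\<bar> powr (12/5)" using sq_bound[OF assms(3)] by simp
  finally have "(1 - exp(-d))/d * a\<^sup>2 \<le> s + s powr (-1/5) * \<bar>a\<bar> powr (12/5)" .
  moreover have "a\<^sup>2/R \<ge> 0" using assms by simp
  ultimately show ?thesis using True by simp
next
  case False
  then have "d > 0" using assms by simp
  have "(1 - exp(-d))/d * a\<^sup>2 \<le> 1/R * a\<^sup>2"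
    using K_bounds(3)[OF assms(1) \<open>d>0\<close>] False assms
    by (intro mult_right_mono) (auto intro: order.trans[OF _ divide_left_mono[of R d 1]])
  then have h1: "(1 - exp(-d))/d * a\<^sup>2 \<le> a\<^sup>2/R" by simp
  have nn: "s powr (-1/5) * \<bar>a\<bar> powr (12/5) \<ge> 0" by simp
  from h1 nn have "(1 - exp(-d))/d * a\<^sup>2 \<le> a\<^sup>2/R + s * 0 + s powr (-1/5) * \<bar>a\<bar> powr (12/5)" by linarith
  then show ?thesis using False by simp
qed


theorem lemma2p4:
  fixes V :: "R3 \<Rightarrow> real" and \<epsilon> :: real and u :: "nat \<Rightarrow> R3 \<Rightarrow> real"
  assumes "Linf_loc V" and "ess_inf_pos V" and "\<epsilon> > 0"
    and "\<forall>n. u n \<in> M_set V \<epsilon>"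
    and "\<exists>C. \<forall>n. W_norm_sq V \<epsilon> (u n) \<le> C"
  shows "\<not> ((\<lambda>n. \<integral>\<^sup>+ x. ennreal (\<bar>u n x\<bar> powr (12/5)) \<partial>lebesgue) \<longlonglongrightarrow> 0)"
proof
  assume lim: "(\<lambda>n. \<integral>\<^sup>+ x. ennreal (\<bar>u n x\<bar> powr (12/5)) \<partial>lebesgue) \<longlonglongrightarrow> 0"
  obtain c where c: "c > 0" "AE x in lebesgue. c \<le> V x"
    using assms(2) unfolding ess_inf_pos_def by auto
  have cV: "AE x in lebesgue. c \<le> V (\<epsilon> *\<^sub>R x)"
    using AE_scale[OF c(2)] assms(3) by simp
  obtain C where C: "\<And>n. W_norm_sq V \<epsilon> (u n) \<le> C" using assms(5) by auto
  have uH: "u n \<in> H1" and uV: "integrable lebesgue (\<lambda>x. V (\<epsilon> *\<^sub>R x) * (u n x)\<^sup>2)"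
    and u1: "(LINT x|lebesgue. phi_pot (u n) x * (u n x)\<^sup>2) = 1" for n
    using assms(4) unfolding M_set_def W_space_def by auto
  have u2: "integrable lebesgue (\<lambda>x. (u n x)\<^sup>2)" for n using uH[of n] unfolding H1_def by auto
  have umeas[measurable]: "u n \<in> borel_measurable lebesgue" for n
    using uH[of n] unfolding H1_def weak_gradient_def by auto
  define A where "A = C / c"
  have L2: "(LINT x|lebesgue. (u n x)\<^sup>2) \<le> A" for n
  proof -
    have "c * (LINT x|lebesgue. (u n x)\<^sup>2) = (LINT x|lebesgue. c * (u n x)\<^sup>2)" by simp
    also have "\<dots> \<le> (LINT x|lebesgue. V (\<epsilon> *\<^sub>R x) * (u n x)\<^sup>2)"
      using cV u2 uV by (intro integral_mono_AE) (auto elim!: eventually_mono intro: mult_right_mono)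
    also have "\<dots> \<le> W_norm_sq V \<epsilon> (u n)"
      unfolding W_norm_sq_def by (simp add: integral_nonneg_AE)
    also have "\<dots> \<le> C" by (rule C)
    finally show ?thesis using c(1) unfolding A_def by (simp add: field_simps mult.commute)
  qed
  have "0 \<le> (LINT x|lebesgue. (u 0 x)\<^sup>2)" by (intro integral_nonneg_AE) auto
  then have A0: "A \<ge> 0" using L2[of 0] by linarith
  define R where "R = 4 * A\<^sup>2 + 1"
  have R0: "R > 0" unfolding R_def by (simp add: add_nonneg_pos)
  define U where "U = enn2real (emeasure lebesgue (ball (0::R3) 1))"
  have Ufin: "emeasure lebesgue (ball (0::R3) 1) = ennreal U"
    unfolding U_def using emeasure_lborel_ball_finite[of "0::R3" 1]
    by (intro ennreal_enn2real[symmetric]) auto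
  define Vr where "Vr = R ^ 3 * U"
  have Vr0: "Vr \<ge> 0" unfolding Vr_def U_def using R0 by simp
  have ballm: "emeasure lebesgue (ball (x::R3) R) = ennreal Vr" for x
  proof -
    have "emeasure lebesgue (ball (x::R3) R) = ennreal (R ^ DIM(R3)) * emeasure lebesgue (ball (0::R3) 1)"
      using R0 by (intro emeasure_lebesgue_ball_conv_unit_ball) simp
    also have "\<dots> = ennreal (R ^ 3) * ennreal U" unfolding Ufin by simp
    also have "\<dots> = ennreal Vr" unfolding Vr_def
      using R0 by (subst ennreal_mult) (auto simp: U_def)
    finally show ?thesis .
  qed
  define s where "s = 1 / (4 * (Vr + 1) * (A + 1))"
  have s0: "s > 0" unfolding s_def using Vr0 A0 by simp
  define \<delta> where "\<delta> = s powr (1/5) / (4 * (A + 1))"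
  have \<delta>0: "\<delta> > 0" unfolding \<delta>_def using s0 A0 by simp
  from lim have "eventually (\<lambda>n. (\<integral>\<^sup>+ x. ennreal (\<bar>u n x\<bar> powr (12/5)) \<partial>lebesgue) < ennreal \<delta>) sequentially"
    using \<delta>0 by (intro order_tendstoD) auto
  then obtain n where Pn: "(\<integral>\<^sup>+ x. ennreal (\<bar>u n x\<bar> powr (12/5)) \<partial>lebesgue) < ennreal \<delta>"
    by (auto simp: eventually_sequentially)
  define p where "p = enn2real (\<integral>\<^sup>+ x. ennreal (\<bar>u n x\<bar> powr (12/5)) \<partial>lebesgue)"
  have Pp: "(\<integral>\<^sup>+ x. ennreal (\<bar>u n x\<bar> powr (12/5)) \<partial>lebesgue) = ennreal p"
    unfolding p_def by (intro ennreal_enn2real[symmetric] order.strict_trans[OF Pn]) simp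
  have p0: "p \<ge> 0" unfolding p_def by simp
  have "ennreal p < ennreal \<delta>" using Pn unfolding Pp .
  then have p\<delta>: "p < \<delta>" using ennreal_less_iff[OF p0] by simp
  define B where "B = A / R + s * Vr + s powr (-1/5) * p"
  have B0: "B \<ge> 0" unfolding B_def using A0 R0 s0 Vr0 p0 by simp
  have phiB: "phi_pot (u n) x \<le> B" for x
  proof -
    let ?g = "\<lambda>y. (1 - exp (- dist x y)) / dist x y * (u n y)\<^sup>2"
    have "(\<lambda>y. (1 - exp(-dist x y))/dist x y) \<in> borel_measurable (borel :: R3 measure)"
      by (intro borel_measurable_divide borel_measurable_diff borel_measurable_continuous_onI continuous_intros)
    then have Km[measurable]: "(\<lambda>y. (1 - exp(-dist x y))/dist x y) \<in> borel_measurable (lebesgue :: R3 measure)"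
      by (simp add: measurable_completion)
    have um[measurable]: "u n \<in> borel_measurable lebesgue" by (rule umeas)
    have gm[measurable]: "?g \<in> borel_measurable lebesgue" by measurable
    have gnn: "\<And>y. ?g y \<ge> 0" using K_bounds(1) by simp
    have gint: "integrable lebesgue ?g"
    proof (rule Bochner_Integration.integrable_bound[OF u2[of n]])
      show "AE y in lebesgue. norm (?g y) \<le> norm ((u n y)\<^sup>2)"
      proof (intro AE_I2)
        fix y
        have "?g y \<le> 1 * (u n y)\<^sup>2" using K_bounds(2)[of "dist x y"] by (intro mult_right_mono) auto
        then show "norm (?g y) \<le> norm ((u n y)\<^sup>2)" using gnn[of y] by simp
      qed
    qed (fact gm)
    have "ennreal (phi_pot (u n) x) = (\<integral>\<^sup>+ y. ennreal (?g y) \<partial>lebesgue)"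
      unfolding phi_pot_def using gint gnn by (intro nn_integral_eq_integral[symmetric]) auto
    also have "\<dots> \<le> (\<integral>\<^sup>+ y. ennreal ((u n y)\<^sup>2 / R) + ennreal s * indicator (ball x R) y
                + ennreal (s powr (-1/5)) * ennreal (\<bar>u n y\<bar> powr (12/5)) \<partial>lebesgue)"
    proof (intro nn_integral_mono)
      fix y
      have "?g y \<le> (u n y)\<^sup>2 / R + s * indicator (ball x R) y + s powr (-1/5) * \<bar>u n y\<bar> powr (12/5)"
        using pt_bound[of "dist x y" R s "u n y"] R0 s0 by (cases "dist x y < R") (auto simp: indicator_def)
      then have "ennreal (?g y) \<le> ennreal ((u n y)\<^sup>2 / R + s * indicator (ball x R) y + s powr (-1/5) * \<bar>u n y\<bar> powr (12/5))"
        by (rule ennreal_leI)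
      also have "\<dots> = ennreal ((u n y)\<^sup>2 / R) + ennreal s * indicator (ball x R) y
                + ennreal (s powr (-1/5)) * ennreal (\<bar>u n y\<bar> powr (12/5))"
        using R0 s0 by (simp add: ennreal_plus ennreal_mult indicator_def)
      finally show "ennreal (?g y) \<le> \<dots>" .
    qed
    also have "\<dots> = (\<integral>\<^sup>+ y. ennreal ((u n y)\<^sup>2 / R) \<partial>lebesgue) + ennreal s * emeasure lebesgue (ball x R)
                + ennreal (s powr (-1/5)) * (\<integral>\<^sup>+ y. ennreal (\<bar>u n y\<bar> powr (12/5)) \<partial>lebesgue)"
    proof -
      have bs: "ball x R \<in> sets lebesgue" by simp
      have m1[measurable]: "(\<lambda>y. ennreal ((u n y)\<^sup>2 / R)) \<in> borel_measurable lebesgue" by measurable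
      have m2[measurable]: "(\<lambda>y. ennreal s * indicator (ball x R) y) \<in> borel_measurable lebesgue"
        using bs by measurable
      have m3[measurable]: "(\<lambda>y. ennreal (\<bar>u n y\<bar> powr (12/5))) \<in> borel_measurable lebesgue" by measurable
      have "(\<integral>\<^sup>+ y. ennreal ((u n y)\<^sup>2 / R) + ennreal s * indicator (ball x R) y
                + ennreal (s powr (-1/5)) * ennreal (\<bar>u n y\<bar> powr (12/5)) \<partial>lebesgue)
          = (\<integral>\<^sup>+ y. ennreal ((u n y)\<^sup>2 / R) + ennreal s * indicator (ball x R) y \<partial>lebesgue)
            + (\<integral>\<^sup>+ y. ennreal (s powr (-1/5)) * ennreal (\<bar>u n y\<bar> powr (12/5)) \<partial>lebesgue)"
        by (rule nn_integral_add) measurable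
      also have "(\<integral>\<^sup>+ y. ennreal ((u n y)\<^sup>2 / R) + ennreal s * indicator (ball x R) y \<partial>lebesgue)
          = (\<integral>\<^sup>+ y. ennreal ((u n y)\<^sup>2 / R) \<partial>lebesgue) + (\<integral>\<^sup>+ y. ennreal s * indicator (ball x R) y \<partial>lebesgue)"
        by (rule nn_integral_add) measurable
      also have "(\<integral>\<^sup>+ y. ennreal s * indicator (ball x R) y \<partial>lebesgue) = ennreal s * emeasure lebesgue (ball x R)"
        by (rule nn_integral_cmult_indicator[OF bs])
      also have "(\<integral>\<^sup>+ y. ennreal (s powr (-1/5)) * ennreal (\<bar>u n y\<bar> powr (12/5)) \<partial>lebesgue)
          = ennreal (s powr (-1/5)) * (\<integral>\<^sup>+ y. ennreal (\<bar>u n y\<bar> powr (12/5)) \<partial>lebesgue)"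
        by (rule nn_integral_cmult[OF m3])
      finally show ?thesis .
    qed
    also have "(\<integral>\<^sup>+ y. ennreal ((u n y)\<^sup>2 / R) \<partial>lebesgue) = ennreal ((LINT y|lebesgue. (u n y)\<^sup>2) / R)"
      using u2[of n] R0 by (subst nn_integral_eq_integral) auto
    also have "\<dots> \<le> ennreal (A / R)" using L2[of n] R0 by (intro ennreal_leI divide_right_mono) auto
    finally have "ennreal (phi_pot (u n) x) \<le> ennreal (A / R) + ennreal s * ennreal Vr + ennreal (s powr (-1/5)) * ennreal p"
      unfolding ballm Pp by (simp add: add_right_mono)
    also have "\<dots> = ennreal B" unfolding B_def using A0 R0 s0 Vr0 p0
      by (simp add: ennreal_plus ennreal_mult)
    finally show ?thesis using B0 by (simp add: ennreal_le_iff)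
  qed
  have int1: "integrable lebesgue (\<lambda>x. phi_pot (u n) x * (u n x)\<^sup>2)"
    using u1[of n] not_integrable_integral_eq by force
  have "1 = (LINT x|lebesgue. phi_pot (u n) x * (u n x)\<^sup>2)" using u1 by simp
  also have "\<dots> \<le> (LINT x|lebesgue. B * (u n x)\<^sup>2)"
    using int1 u2[of n] phiB by (intro integral_mono) (auto intro: mult_right_mono)
  also have "\<dots> = B * (LINT x|lebesgue. (u n x)\<^sup>2)" by simp
  also have "\<dots> \<le> B * A" using L2[of n] B0 by (rule mult_left_mono)
  also have "\<dots> < 1"
  proof -
    have "A / R * A = A\<^sup>2 / R" by (simp add: power2_eq_square)
    also have "\<dots> \<le> (R/4) / R" using R0 by (intro divide_right_mono) (auto simp: R_def)
    also have "\<dots> = 1/4" using R0 by simp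
    finally have t1: "A / R * A \<le> 1/4" .
    have d: "(Vr+1)*(A+1) > 0" using Vr0 A0 by simp
    have e: "Vr*A \<le> (Vr+1)*(A+1)" using Vr0 A0 by (simp add: algebra_simps)
    have "s * Vr * A = (Vr*A) / ((Vr+1)*(A+1)) / 4" unfolding s_def by simp
    moreover have "(Vr*A) / ((Vr+1)*(A+1)) \<le> 1" using d e by simp
    ultimately have t2: "s * Vr * A \<le> 1/4" by simp
    have "s powr (-1/5) * p * A \<le> s powr (-1/5) * \<delta> * A"
      using p\<delta> A0 s0 by (intro mult_right_mono mult_left_mono) auto
    also have "\<dots> = A / (4 * (A + 1))"
      unfolding \<delta>_def using s0 A0 by (simp add: powr_minus field_simps)
    also have "\<dots> < 1/4" using A0 by (simp add: field_simps)
    finally have t3: "s powr (-1/5) * p * A < 1/4" .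
    have "B * A = A / R * A + s * Vr * A + s powr (-1/5) * p * A" unfolding B_def by (simp add: algebra_simps)
    then show ?thesis using t1 t2 t3 by linarith
  qed
  finally show False by simp
qed

end
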